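(* Consider the $K$-class stochastic block model on $n$ nodes (labels $Z_i$ i.i.d. with probability vector $\pi$; given $Z$, $A_{ij}=A_{ji}$, $i<j$, independent Bernoulli$(P_{Z_iZ_j})$, $A_{ii}=0$, $P$ symmetric with entries in $[0,1]$). For any $x>0$, $$\Pr\Big(\max_{e\in\{1,\dots,K\}^n}\big\|\widetilde O(e)-\mathbb E(\widetilde O(e)\mid Z)\big\|_\infty>xn^2\Big)\le2K^{n+2}e^{-x^2n^2/(8\|P\|_\infty+4x/3)}.$$
   Context: For a labelling $e$, $O_{ab}(e)=\sum_{i,j}A_{ij}1\{e_i=a,e_j=b\}$ for $a\ne b$ and $O_{aa}(e)=\sum_{i<j}A_{ij}1\{e_i=e_j=a\}$; $\widetilde O_{ab}(e)=O_{ab}(e)$ for $a\ne b$ and $\widetilde O_{aa}(e)=2O_{aa}(e)$; $\widetilde O(e)$ is the $K\times K$ matrix of these. For a matrix $M$, $\|M\|_\infty=\max_{a,b}|M_{ab}|$. *)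

theory Defs
  imports "HOL-Analysis.Analysis"
begin

(* Nodes are 0..<n, labels (classes) are 0..<K.
   An adjacency realisation is the set of edges, a subset of the index pairs (i,j) with i<j<n. *)

definition node_pairs :: "nat \<Rightarrow> (nat \<times> nat) set" where
  "node_pairs n = {(i, j). i < j \<and> j < n}"

definition adj :: "(nat \<times> nat) set \<Rightarrow> nat \<Rightarrow> nat \<Rightarrow> real" where
  "adj A i j = (if (min i j, max i j) \<in> A \<and> i \<noteq> j then 1 else 0)"

definition labellings :: "nat \<Rightarrow> nat \<Rightarrow> (nat \<Rightarrow> nat) set" where
  "labellings n K = {0..<n} \<rightarrow>\<^sub>E {0..<K}"

definition Z_weight :: "nat \<Rightarrow> (nat \<Rightarrow> real) \<Rightarrow> (nat \<Rightarrow> nat) \<Rightarrow> real" where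
  "Z_weight n \<pi> z = (\<Prod>i<n. \<pi> (z i))"

definition A_weight :: "nat \<Rightarrow> (nat \<Rightarrow> nat \<Rightarrow> real) \<Rightarrow> (nat \<Rightarrow> nat) \<Rightarrow> (nat \<times> nat) set \<Rightarrow> real" where
  "A_weight n P z A = (\<Prod>p\<in>node_pairs n.
      if p \<in> A then P (z (fst p)) (z (snd p)) else 1 - P (z (fst p)) (z (snd p)))"

definition cond_exp_Z :: "nat \<Rightarrow> (nat \<Rightarrow> nat \<Rightarrow> real) \<Rightarrow> ((nat \<Rightarrow> nat) \<Rightarrow> (nat \<times> nat) set \<Rightarrow> real)
    \<Rightarrow> (nat \<Rightarrow> nat) \<Rightarrow> real" where
  "cond_exp_Z n P f z = (\<Sum>A\<in>Pow (node_pairs n). A_weight n P z A * f z A)"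

definition sbm_prob :: "nat \<Rightarrow> nat \<Rightarrow> (nat \<Rightarrow> real) \<Rightarrow> (nat \<Rightarrow> nat \<Rightarrow> real)
    \<Rightarrow> ((nat \<Rightarrow> nat) \<Rightarrow> (nat \<times> nat) set \<Rightarrow> bool) \<Rightarrow> real" where
  "sbm_prob n K \<pi> P E = (\<Sum>z\<in>labellings n K. \<Sum>A\<in>Pow (node_pairs n).
      (if E z A then Z_weight n \<pi> z * A_weight n P z A else 0))"

definition O_count :: "nat \<Rightarrow> (nat \<times> nat) set \<Rightarrow> (nat \<Rightarrow> nat) \<Rightarrow> nat \<Rightarrow> nat \<Rightarrow> real" where
  "O_count n A e a b =
     (if a \<noteq> b then (\<Sum>i<n. \<Sum>j<n. adj A i j * (if e i = a \<and> e j = b then 1 else 0))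
      else (\<Sum>i<n. \<Sum>j<n. if i < j then adj A i j * (if e i = a \<and> e j = a then 1 else 0) else 0))"

definition O_tilde :: "nat \<Rightarrow> (nat \<times> nat) set \<Rightarrow> (nat \<Rightarrow> nat) \<Rightarrow> nat \<Rightarrow> nat \<Rightarrow> real" where
  "O_tilde n A e a b = (if a = b then 2 * O_count n A e a a else O_count n A e a b)"

definition max_norm :: "nat \<Rightarrow> (nat \<Rightarrow> nat \<Rightarrow> real) \<Rightarrow> real" where
  "max_norm K M = Max {\<bar>M a b\<bar> | a b. a < K \<and> b < K}"

end

theory Submission
  imports Defs
begin


definition phi :: "real \<Rightarrow> real" where "phi u = exp u - 1 - u"

lemma phi_nonneg: "phi u \<ge> 0"
  unfolding phi_def using exp_ge_add_one_self[of u] by linarith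

lemma phi_mono: assumes "0 \<le> u" "u \<le> v" shows "phi u \<le> phi v"
proof -
  have "exp v = exp u * exp (v - u)" by (simp add: exp_add[symmetric])
  also have "\<dots> \<ge> exp u * (1 + (v - u))"
    using exp_ge_add_one_self[of "v-u"] by (intro mult_left_mono) auto
  finally have "exp v \<ge> exp u + exp u * (v - u)" by (simp add: algebra_simps)
  moreover have "exp u * (v - u) \<ge> 1 * (v - u)"
    using assms by (intro mult_right_mono) auto
  then have "exp u * (v - u) \<ge> v - u" by simp
  ultimately show ?thesis unfolding phi_def by linarith
qed

lemma exp_neg_upper: fixes u :: real assumes "0 \<le> u" shows "exp (-u) \<le> 1 - u + u^2/2"
proof -
  obtain t where t: "exp (-u) = (\<Sum>m<3. (-u) ^ m / fact m) + (exp t / fact 3) * (-u) ^ 3"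
    using Maclaurin_exp_le[of "-u" 3] by blast
  have "(exp t / fact 3) * (-u) ^ 3 \<le> 0"
    using assms by (intro mult_nonneg_nonpos) (auto simp: power_odd_eq)
  moreover have "(\<Sum>m<3. (-u) ^ m / fact m) = 1 - u + u^2/2"
    by (simp add: numeral_3_eq_3 power2_eq_square)
  ultimately show ?thesis using t by linarith
qed

lemma phi_abs: assumes "\<bar>v\<bar> \<le> w" shows "phi v \<le> phi w"
proof (cases "v \<ge> 0")
  case True then show ?thesis using assms phi_mono by auto
next
  case False
  define u where "u = -v"
  have u: "u \<ge> 0" "u \<le> w" using False assms by (auto simp: u_def)
  have "phi v \<le> u^2/2" using exp_neg_upper[OF u(1)] unfolding phi_def u_def by simp
  also have "\<dots> \<le> phi u" using exp_lower_Taylor_quadratic[OF u(1)] unfolding phi_def by simp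
  also have "\<dots> \<le> phi w" using phi_mono u by auto
  finally show ?thesis .
qed

lemma fact_bound: "2 * 3 ^ k \<le> (fact (k + 2) :: real)"
proof (induction k)
  case 0 then show ?case by (simp add: numeral_2_eq_2)
next
  case (Suc k)
  have "fact (Suc k + 2) = real (k + 3) * (fact (k + 2) :: real)"
    by (simp add: numeral_3_eq_3 numeral_2_eq_2 algebra_simps)
  also have "\<dots> \<ge> 3 * (2 * 3 ^ k)"
    using Suc by (intro mult_mono) auto
  finally show ?case by simp
qed

lemma phi_bern: assumes "0 \<le> m" "m < 3" shows "phi m \<le> m^2 / (2 * (1 - m/3))"
proof -
  have s: "(\<lambda>k. m^k / fact k) sums exp m" using exp_converges[of m] by (simp add: divide_inverse_commute)
  have "(\<lambda>k. m^(k+2) / fact (k+2)) sums (exp m - (\<Sum>k<2. m^k / fact k))"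
    using s sums_iff_shift[of "\<lambda>k. m^k / fact k" 2 "exp m - (\<Sum>k<2. m^k / fact k)"] by simp
  then have s2: "(\<lambda>k. m^(k+2) / fact (k+2)) sums phi m"
    by (simp add: phi_def numeral_2_eq_2 diff_diff_eq)
  have g: "(\<lambda>k. m^2/2 * (m/3)^k) sums (m^2/2 * (1 / (1 - m/3)))"
    using assms by (intro sums_mult geometric_sums) auto
  have le: "m^(k+2) / fact (k+2) \<le> m^2/2 * (m/3)^k" for k
  proof -
    have "m^(k+2) / fact (k+2) \<le> m^(k+2) / (2 * 3^k)"
      using assms fact_bound[of k] by (intro divide_left_mono) auto
    also have "\<dots> = m^2/2 * (m/3)^k" by (simp add: power_add power_divide algebra_simps power2_eq_square)
    finally show ?thesis .
  qed
  have "phi m \<le> m^2/2 * (1 / (1 - m/3))" by (rule sums_le[OF le s2 g])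
  then show ?thesis by simp
qed



lemma sum_pow_prod:
  fixes f :: "'a \<Rightarrow> bool \<Rightarrow> real"
  assumes "finite N"
  shows "(\<Sum>X\<in>Pow N. \<Prod>p\<in>N. f p (p \<in> X)) = (\<Prod>p\<in>N. f p True + f p False)"
proof -
  have "(\<Prod>p\<in>N. f p True + f p False) = (\<Sum>X\<in>Pow N. (\<Prod>p\<in>X. f p True) * (\<Prod>p\<in>N-X. f p False))"
    by (rule prod_add[OF assms])
  also have "\<dots> = (\<Sum>X\<in>Pow N. \<Prod>p\<in>N. f p (p \<in> X))"
  proof (rule sum.cong[OF refl])
    fix X assume X: "X \<in> Pow N"
    have "(\<Prod>p\<in>N. f p (p \<in> X)) = (\<Prod>p\<in>N-X. f p (p \<in> X)) * (\<Prod>p\<in>X. f p (p \<in> X))"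
      using X assms by (intro prod.subset_diff) auto
    also have "(\<Prod>p\<in>N-X. f p (p \<in> X)) = (\<Prod>p\<in>N-X. f p False)" by (intro prod.cong) auto
    also have "(\<Prod>p\<in>X. f p (p \<in> X)) = (\<Prod>p\<in>X. f p True)" by (intro prod.cong) auto
    finally show "(\<Prod>p\<in>X. f p True) * (\<Prod>p\<in>N-X. f p False) = (\<Prod>p\<in>N. f p (p \<in> X))" by simp
  qed
  finally show ?thesis by simp
qed

definition wt :: "('a \<Rightarrow> real) \<Rightarrow> 'a set \<Rightarrow> 'a set \<Rightarrow> real" where
  "wt q N X = (\<Prod>p\<in>N. if p \<in> X then q p else 1 - q p)"

lemma wt_nonneg: "(\<And>p. p \<in> N \<Longrightarrow> 0 \<le> q p \<and> q p \<le> 1) \<Longrightarrow> wt q N X \<ge> 0"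
  unfolding wt_def by (intro prod_nonneg) auto

lemma wt_mean:
  assumes "finite N" "p0 \<in> N"
  shows "(\<Sum>X\<in>Pow N. wt q N X * (if p0 \<in> X then 1 else 0)) = q p0"
proof -
  define f where "f p b = (if p = p0 then (if b then q p else 0) else (if b then q p else 1 - q p))" for p b
  have "(\<Sum>X\<in>Pow N. wt q N X * (if p0 \<in> X then 1 else 0)) = (\<Sum>X\<in>Pow N. \<Prod>p\<in>N. f p (p \<in> X))"
  proof (rule sum.cong[OF refl])
    fix X assume X: "X \<in> Pow N"
    have "(\<Prod>p\<in>N. f p (p \<in> X)) = f p0 (p0 \<in> X) * (\<Prod>p\<in>N - {p0}. f p (p \<in> X))"
      using assms by (intro prod.remove) auto
    also have "(\<Prod>p\<in>N - {p0}. f p (p \<in> X)) = (\<Prod>p\<in>N - {p0}. if p \<in> X then q p else 1 - q p)"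
      by (intro prod.cong) (auto simp: f_def)
    also have "wt q N X = (if p0 \<in> X then q p0 else 1 - q p0) * (\<Prod>p\<in>N - {p0}. if p \<in> X then q p else 1 - q p)"
      unfolding wt_def using assms by (intro prod.remove) auto
    ultimately show "wt q N X * (if p0 \<in> X then 1 else 0) = (\<Prod>p\<in>N. f p (p \<in> X))"
      by (auto simp: f_def)
  qed
  also have "\<dots> = (\<Prod>p\<in>N. f p True + f p False)" by (rule sum_pow_prod[OF assms(1)])
  also have "\<dots> = (f p0 True + f p0 False) * (\<Prod>p\<in>N - {p0}. f p True + f p False)"
    using assms by (intro prod.remove) auto
  also have "(\<Prod>p\<in>N - {p0}. f p True + f p False) = 1"
    by (intro prod.neutral) (auto simp: f_def)
  finally show ?thesis by (simp add: f_def)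
qed

lemma factor_bound:
  fixes q v :: real
  assumes "0 \<le> q" "q \<le> 1"
  shows "q * exp (v * (1 - q)) + (1 - q) * exp (v * (0 - q)) \<le> exp (q * phi v)"
proof -
  have "q * exp (v * (1 - q)) + (1 - q) * exp (v * (0 - q)) = exp (- v * q) * (1 + q * (exp v - 1))"
    by (simp add: algebra_simps exp_diff exp_minus field_simps)
  also have "\<dots> \<le> exp (- v * q) * exp (q * (exp v - 1))"
    by (intro mult_left_mono) (auto simp: exp_ge_add_one_self)
  also have "\<dots> = exp (q * phi v)" by (simp add: phi_def exp_add[symmetric] algebra_simps)
  finally show ?thesis .
qed

lemma chernoff:
  fixes N :: "'a set" and q c :: "'a \<Rightarrow> real"
  assumes fin: "finite N" and q: "\<And>p. p \<in> N \<Longrightarrow> 0 \<le> q p \<and> q p \<le> 1"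
    and c: "\<And>p. p \<in> N \<Longrightarrow> \<bar>c p\<bar> \<le> C" and l: "l \<ge> 0"
  shows "(\<Sum>X\<in>Pow N. wt q N X * (if t < (\<Sum>p\<in>N. c p * ((if p \<in> X then 1 else 0) - q p)) then 1 else 0))
          \<le> exp (- l * t + (\<Sum>p\<in>N. q p) * phi (l * C))"
proof -
  define S where "S X = (\<Sum>p\<in>N. c p * ((if p \<in> X then 1 else 0) - q p))" for X
  define f where "f p b = (if b then q p else 1 - q p) * exp (l * c p * ((if b then 1 else 0) - q p))" for p b
  have "(\<Sum>X\<in>Pow N. wt q N X * (if t < S X then 1 else 0)) \<le> (\<Sum>X\<in>Pow N. wt q N X * exp (l * (S X - t)))"
  proof (intro sum_mono mult_left_mono wt_nonneg q)
    fix X show "(if t < S X then 1 else 0) \<le> exp (l * (S X - t))"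
      using l by (auto intro: order.trans[OF _ exp_ge_add_one_self])
  qed
  also have "\<dots> = (\<Sum>X\<in>Pow N. exp (- l * t) * (\<Prod>p\<in>N. f p (p \<in> X)))"
  proof (rule sum.cong[OF refl])
    fix X
    have "exp (l * (S X - t)) = exp (- l * t) * exp (\<Sum>p\<in>N. l * c p * ((if p \<in> X then 1 else 0) - q p))"
      by (simp add: S_def sum_distrib_left exp_add[symmetric] algebra_simps)
    also have "\<dots> = exp (- l * t) * (\<Prod>p\<in>N. exp (l * c p * ((if p \<in> X then 1 else 0) - q p)))"
      using fin by (simp add: exp_sum)
    finally show "wt q N X * exp (l * (S X - t)) = exp (- l * t) * (\<Prod>p\<in>N. f p (p \<in> X))"
      by (simp add: wt_def f_def prod.distrib)
  qed
  also have "\<dots> = exp (- l * t) * (\<Prod>p\<in>N. f p True + f p False)"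
    by (simp add: sum_distrib_left[symmetric] sum_pow_prod[OF fin])
  also have "\<dots> \<le> exp (- l * t) * (\<Prod>p\<in>N. exp (q p * phi (l * C)))"
  proof (intro mult_left_mono prod_mono conjI)
    fix p assume p: "p \<in> N"
    show "0 \<le> f p True + f p False" using q[OF p] by (auto simp: f_def)
    have "f p True + f p False \<le> exp (q p * phi (l * c p))"
      using factor_bound[of "q p" "l * c p"] q[OF p] by (simp add: f_def mult.assoc)
    also have "\<dots> \<le> exp (q p * phi (l * C))"
      using q[OF p] c[OF p] l by (auto intro!: mult_left_mono phi_abs simp: abs_mult)
    finally show "f p True + f p False \<le> exp (q p * phi (l * C))" .
  qed auto
  also have "\<dots> = exp (- l * t + (\<Sum>p\<in>N. q p) * phi (l * C))"
    using fin by (simp add: exp_sum[symmetric] exp_add[symmetric] sum_distrib_right)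
  finally show ?thesis unfolding S_def .
qed



lemma key_alg:
  fixes pm x :: real
  assumes pm: "pm \<ge> 0" and x: "x > 0"
  defines "m \<equiv> 3 * x / (6 * pm + 2 * x)"
  shows "m * x / 2 - pm / 2 * phi m \<ge> x^2 / (8 * pm + 4 * x / 3)"
proof -
  define D where "D = 6 * pm + 2 * x"
  have D: "D > 0" using pm x by (simp add: D_def)
  have m0: "m \<ge> 0" using x D by (simp add: m_def D_def[symmetric])
  have m3: "m < 3" using x pm D unfolding m_def D_def[symmetric] by (simp add: divide_less_eq D_def)
  have "phi m \<le> m^2 / (2 * (1 - m/3))" by (rule phi_bern[OF m0 m3])
  also have "m^2 / (2 * (1 - m/3)) = 9 * x^2 / (2 * D * (6 * pm + x))"
  proof -
    have "1 - m/3 = (6 * pm + x) / D" using D unfolding m_def D_def[symmetric] by (simp add: field_simps D_def)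
    moreover have "m^2 = 9 * x^2 / D^2" unfolding m_def D_def[symmetric] by (simp add: power_divide)
    moreover have "6 * pm + x > 0" using pm x by simp
    moreover have "(9 * x^2 / D^2) / (2 * ((6 * pm + x) / D)) = 9 * x^2 / (2 * D * (6 * pm + x))"
      using D \<open>6 * pm + x > 0\<close> by (simp add: field_simps power2_eq_square)
    ultimately show ?thesis by simp
  qed
  finally have ph: "phi m \<le> 9 * x^2 / (2 * D * (6 * pm + x))" .
  have "pm / 2 * phi m \<le> pm / 2 * (9 * x^2 / (2 * D * (6 * pm + x)))"
    using ph pm by (intro mult_left_mono) auto
  moreover have "m * x / 2 - pm / 2 * (9 * x^2 / (2 * D * (6 * pm + x))) = x^2 * (27 * pm + 6 * x) / (4 * D * (6 * pm + x))"
  proof -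
    have h: "6 * pm + x \<noteq> 0" "D \<noteq> 0" using pm x D by auto
    have h2: "D * (x * 4) + D * (pm * 24) \<noteq> 0" using pm x D
      by (metis add_pos_nonneg mult_pos_pos mult_nonneg_nonneg less_le zero_less_numeral less_imp_le)
    have mD: "m = 3 * x / D" unfolding m_def D_def by simp
    define E where "E = 6 * pm + x"
    have E: "E \<noteq> 0" using h by (simp add: E_def)
    have a1: "m * x / 2 = 6 * x^2 * E / (4 * D * E)" unfolding mD using h E by (simp add: power2_eq_square)
    have a2: "pm / 2 * (9 * x^2 / (2 * D * E)) = 9 * pm * x^2 / (4 * D * E)" by simp
    have a3: "6 * x^2 * E - 9 * pm * x^2 = x^2 * (27 * pm + 6 * x)" by (simp add: E_def algebra_simps)
    have "m * x / 2 - pm / 2 * (9 * x^2 / (2 * D * E)) = (6 * x^2 * E - 9 * pm * x^2) / (4 * D * E)"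
      unfolding a1 a2 by (simp add: diff_divide_distrib)
    then show ?thesis using a3 by (simp add: E_def)
  qed
  moreover have "x^2 * (27 * pm + 6 * x) / (4 * D * (6 * pm + x)) \<ge> x^2 / (8 * pm + 4 * x / 3)"
  proof -
    have e: "x^2 / (8 * pm + 4 * x / 3) = 3 * x^2 / (4 * (6 * pm + x))"
      using pm x by (simp add: field_simps)
    have "x^2 * (3 * D) / (4 * D * (6 * pm + x)) = (D * (3 * x^2)) / (D * (4 * (6 * pm + x)))"
      by (simp add: algebra_simps)
    also have "\<dots> = 3 * x^2 / (4 * (6 * pm + x))"
      using D by (intro nonzero_mult_divide_mult_cancel_left) simp
    finally have "3 * x^2 / (4 * (6 * pm + x)) = x^2 * (3 * D) / (4 * D * (6 * pm + x))" by simp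
    also have "\<dots> \<le> x^2 * (27 * pm + 6 * x) / (4 * D * (6 * pm + x))"
      using D pm x by (intro divide_right_mono mult_left_mono) (auto simp: D_def)
    finally show ?thesis using e by simp
  qed
  ultimately show ?thesis by linarith
qed

lemma bernstein2:
  fixes N :: "'a set" and q c :: "'a \<Rightarrow> real" and T pm x :: real
  assumes fin: "finite N" and q: "\<And>p. p \<in> N \<Longrightarrow> 0 \<le> q p \<and> q p \<le> 1"
    and c: "\<And>p. p \<in> N \<Longrightarrow> \<bar>c p\<bar> \<le> 2"
    and sq: "(\<Sum>p\<in>N. q p) \<le> T / 2 * pm" and pm: "pm \<ge> 0" and x: "x > 0" and T: "T \<ge> 0"
  shows "(\<Sum>X\<in>Pow N. wt q N X * (if x * T < \<bar>\<Sum>p\<in>N. c p * ((if p \<in> X then 1 else 0) - q p)\<bar> then 1 else 0))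
          \<le> 2 * exp (- (x^2 * T) / (8 * pm + 4 * x / 3))"
proof -
  define m where "m = 3 * x / (6 * pm + 2 * x)"
  have m0: "m \<ge> 0" using x pm by (simp add: m_def)
  define l where "l = m / 2"
  have l: "l \<ge> 0" using m0 by (simp add: l_def)
  have ka: "m * x / 2 - pm / 2 * phi m \<ge> x^2 / (8 * pm + 4 * x / 3)"
    using key_alg[OF pm x] by (simp add: m_def)
  have expo: "- l * (x * T) + (\<Sum>p\<in>N. q p) * phi (l * 2) \<le> - (x^2 * T) / (8 * pm + 4 * x / 3)"
  proof -
    have "(\<Sum>p\<in>N. q p) * phi (l * 2) \<le> T / 2 * pm * phi m"
      using mult_right_mono[OF sq phi_nonneg[of m]] by (simp add: l_def)
    moreover have "T * (x^2 / (8 * pm + 4 * x / 3)) \<le> T * (m * x / 2 - pm / 2 * phi m)"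
      using ka T by (intro mult_left_mono) auto
    ultimately show ?thesis by (simp add: l_def algebra_simps)
  qed
  define S where "S X = (\<Sum>p\<in>N. c p * ((if p \<in> X then 1 else 0) - q p))" for X
  define S' where "S' X = (\<Sum>p\<in>N. (- c p) * ((if p \<in> X then 1 else 0) - q p))" for X
  have SS: "S' X = - S X" for X by (simp add: S_def S'_def sum_negf)
  have "(\<Sum>X\<in>Pow N. wt q N X * (if x * T < \<bar>S X\<bar> then 1 else 0))
     \<le> (\<Sum>X\<in>Pow N. wt q N X * (if x * T < S X then 1 else 0) + wt q N X * (if x * T < S' X then 1 else 0))"
    by (intro sum_mono) (auto simp: SS wt_nonneg q distrib_left[symmetric] intro!: mult_left_mono)
  also have "\<dots> = (\<Sum>X\<in>Pow N. wt q N X * (if x * T < S X then 1 else 0)) + (\<Sum>X\<in>Pow N. wt q N X * (if x * T < S' X then 1 else 0))"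
    by (rule sum.distrib)
  also have "\<dots> \<le> exp (- l * (x * T) + (\<Sum>p\<in>N. q p) * phi (l * 2)) + exp (- l * (x * T) + (\<Sum>p\<in>N. q p) * phi (l * 2))"
    unfolding S_def S'_def
    by (intro add_mono chernoff[OF fin q _ l]) (auto dest: c)
  also have "\<dots> \<le> 2 * exp (- (x^2 * T) / (8 * pm + 4 * x / 3))"
    using expo by simp
  finally show ?thesis unfolding S_def .
qed



lemma node_pairs_Suc: "node_pairs (Suc n) = node_pairs n \<union> (\<lambda>i. (i, n)) ` {..<n}"
  unfolding node_pairs_def by auto

lemma finite_node_pairs: "finite (node_pairs n)"
  by (rule finite_subset[of _ "{..<n} \<times> {..<n}"]) (auto simp: node_pairs_def)

lemma card_node_pairs: "2 * card (node_pairs n) \<le> n^2"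
proof (induction n)
  case 0 then show ?case by (simp add: node_pairs_def)
next
  case (Suc n)
  have "card (node_pairs (Suc n)) \<le> card (node_pairs n) + card ((\<lambda>i. (i, n)) ` {..<n})"
    unfolding node_pairs_Suc by (rule card_Un_le)
  also have "card ((\<lambda>i. (i, n)) ` {..<n}) \<le> n" using card_image_le[of "{..<n}" "\<lambda>i. (i, n)"] by simp
  finally show ?case using Suc by (simp add: power2_eq_square)
qed

lemma double_sum_pairs:
  fixes h :: "nat \<Rightarrow> nat \<Rightarrow> real"
  assumes "\<And>i. h i i = 0"
  shows "(\<Sum>i<n. \<Sum>j<n. h i j) = (\<Sum>p\<in>node_pairs n. h (fst p) (snd p) + h (snd p) (fst p))"
proof (induction n)
  case 0 then show ?case by (simp add: node_pairs_def)
next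
  case (Suc n)
  have "(\<Sum>i<Suc n. \<Sum>j<Suc n. h i j) = (\<Sum>i<n. \<Sum>j<n. h i j) + (\<Sum>i<n. h i n + h n i) + h n n"
    by (simp add: sum.distrib)
  moreover have "(\<Sum>p\<in>node_pairs (Suc n). h (fst p) (snd p) + h (snd p) (fst p))
      = (\<Sum>p\<in>node_pairs n. h (fst p) (snd p) + h (snd p) (fst p))
        + (\<Sum>p\<in>(\<lambda>i. (i, n)) ` {..<n}. h (fst p) (snd p) + h (snd p) (fst p))"
    unfolding node_pairs_Suc
    by (rule sum.union_disjoint) (simp_all add: finite_node_pairs, auto simp: node_pairs_def)
  moreover have "(\<Sum>p\<in>(\<lambda>i. (i, n)) ` {..<n}. h (fst p) (snd p) + h (snd p) (fst p)) = (\<Sum>i<n. h i n + h n i)"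
    by (subst sum.reindex) (auto simp: inj_on_def)
  ultimately show ?case using Suc assms by simp
qed

definition coef :: "(nat \<Rightarrow> nat) \<Rightarrow> nat \<Rightarrow> nat \<Rightarrow> nat \<times> nat \<Rightarrow> real" where
  "coef e a b p = (if a = b then 2 * (if e (fst p) = a \<and> e (snd p) = a then 1 else 0)
      else (if e (fst p) = a \<and> e (snd p) = b then 1 else 0) + (if e (snd p) = a \<and> e (fst p) = b then 1 else 0))"

lemma coef_bound: "\<bar>coef e a b p\<bar> \<le> 2"
proof -
  have "0 \<le> coef e a b p \<and> coef e a b p \<le> 2"
    unfolding coef_def by (cases "a = b"; cases "e (fst p) = a"; cases "e (snd p) = a"; cases "e (fst p) = b"; cases "e (snd p) = b") simp_all
  then show ?thesis by linarith
qed

lemma adj_pair: "p \<in> node_pairs n \<Longrightarrow> adj A (fst p) (snd p) = (if p \<in> A then 1 else 0)"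
  "p \<in> node_pairs n \<Longrightarrow> adj A (snd p) (fst p) = (if p \<in> A then 1 else 0)"
proof -
  assume p: "p \<in> node_pairs n"
  obtain i j where ij: "p = (i, j)" "i < j" using p unfolding node_pairs_def by auto
  show "adj A (fst p) (snd p) = (if p \<in> A then 1 else 0)" using ij unfolding adj_def by simp
next
  assume p: "p \<in> node_pairs n"
  obtain i j where ij: "p = (i, j)" "i < j" using p unfolding node_pairs_def by auto
  show "adj A (snd p) (fst p) = (if p \<in> A then 1 else 0)" using ij unfolding adj_def by simp
qed

lemma O_tilde_pairs_eq:
  "O_tilde n A e a a = (\<Sum>p\<in>node_pairs n. coef e a a p * (if p \<in> A then 1 else 0))"
proof -
  define h where "h i j = (if i < j then adj A i j * (if e i = a \<and> e j = a then 1 else 0) else (0::real))" for i j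
  have "O_count n A e a a = (\<Sum>i<n. \<Sum>j<n. h i j)" by (simp add: O_count_def h_def)
  also have "\<dots> = (\<Sum>p\<in>node_pairs n. h (fst p) (snd p) + h (snd p) (fst p))"
    by (rule double_sum_pairs) (simp add: h_def)
  also have "\<dots> = (\<Sum>p\<in>node_pairs n. (if p \<in> A then 1 else 0) * (if e (fst p) = a \<and> e (snd p) = a then 1 else 0))"
    by (intro sum.cong refl) (auto simp: adj_pair h_def node_pairs_def)
  finally have "O_tilde n A e a a = 2 * (\<Sum>p\<in>node_pairs n. (if p \<in> A then 1 else 0) * (if e (fst p) = a \<and> e (snd p) = a then 1 else 0))"
    unfolding O_tilde_def by simp
  also have "\<dots> = (\<Sum>p\<in>node_pairs n. coef e a a p * (if p \<in> A then 1 else 0))"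
    unfolding sum_distrib_left by (intro sum.cong refl) (simp add: coef_def)
  finally show ?thesis .
qed

lemma O_tilde_pairs_neq:
  assumes ab: "a \<noteq> b"
  shows "O_tilde n A e a b = (\<Sum>p\<in>node_pairs n. coef e a b p * (if p \<in> A then 1 else 0))"
proof -
  define h where "h i j = adj A i j * (if e i = a \<and> e j = b then 1 else (0::real))" for i j
  have "O_count n A e a b = (\<Sum>i<n. \<Sum>j<n. h i j)" using ab by (simp add: O_count_def h_def)
  also have "\<dots> = (\<Sum>p\<in>node_pairs n. h (fst p) (snd p) + h (snd p) (fst p))"
    by (rule double_sum_pairs) (simp add: h_def adj_def)
  also have "\<dots> = (\<Sum>p\<in>node_pairs n. coef e a b p * (if p \<in> A then 1 else 0))"
  proof (intro sum.cong refl)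
    fix p assume p: "p \<in> node_pairs n"
    show "h (fst p) (snd p) + h (snd p) (fst p) = coef e a b p * (if p \<in> A then 1 else 0)"
      unfolding h_def adj_pair[OF p] coef_def using ab by simp
  qed
  finally show ?thesis using ab unfolding O_tilde_def by simp
qed

lemma O_tilde_pairs:
  "O_tilde n A e a b = (\<Sum>p\<in>node_pairs n. coef e a b p * (if p \<in> A then 1 else 0))"
  using O_tilde_pairs_eq O_tilde_pairs_neq by (cases "a = b") auto

lemma A_weight_wt: "A_weight n P z A = wt (\<lambda>p. P (z (fst p)) (z (snd p))) (node_pairs n) A"
  unfolding A_weight_def wt_def by simp

lemma cond_exp_O:
  "cond_exp_Z n P (\<lambda>z' A'. O_tilde n A' e a b) z
    = (\<Sum>p\<in>node_pairs n. coef e a b p * P (z (fst p)) (z (snd p)))"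
proof -
  define q where "q p = P (z (fst p)) (z (snd p))" for p
  have "cond_exp_Z n P (\<lambda>z' A'. O_tilde n A' e a b) z
     = (\<Sum>A\<in>Pow (node_pairs n). \<Sum>p\<in>node_pairs n. coef e a b p * (wt q (node_pairs n) A * (if p \<in> A then 1 else 0)))"
    unfolding cond_exp_Z_def O_tilde_pairs A_weight_wt q_def[symmetric]
    by (simp add: sum_distrib_left algebra_simps)
  also have "\<dots> = (\<Sum>p\<in>node_pairs n. coef e a b p * (\<Sum>A\<in>Pow (node_pairs n). wt q (node_pairs n) A * (if p \<in> A then 1 else 0)))"
    by (subst sum.swap) (simp add: sum_distrib_left)
  also have "\<dots> = (\<Sum>p\<in>node_pairs n. coef e a b p * q p)"
    by (intro sum.cong refl) (simp add: wt_mean finite_node_pairs)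
  finally show ?thesis by (simp add: q_def)
qed

lemma dev_pairs:
  "O_tilde n A e a b - cond_exp_Z n P (\<lambda>z' A'. O_tilde n A' e a b) z
   = (\<Sum>p\<in>node_pairs n. coef e a b p * ((if p \<in> A then 1 else 0) - P (z (fst p)) (z (snd p))))"
  unfolding cond_exp_O O_tilde_pairs[of n A] by (simp add: sum_subtractf[symmetric] right_diff_distrib)



lemma max_norm_gt:
  assumes K: "K \<ge> 1" and gt: "max_norm K M > t"
  shows "\<exists>a<K. \<exists>b<K. t < \<bar>M a b\<bar>"
proof -
  have eq: "{\<bar>M a b\<bar> | a b. a < K \<and> b < K} = (\<lambda>(a, b). \<bar>M a b\<bar>) ` ({..<K} \<times> {..<K})" by auto
  have fin: "finite {\<bar>M a b\<bar> | a b. a < K \<and> b < K}" unfolding eq by simp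
  have "\<bar>M 0 0\<bar> \<in> {\<bar>M a b\<bar> | a b. a < K \<and> b < K}" using K by (intro CollectI exI[of _ 0]) auto
  then have ne: "{\<bar>M a b\<bar> | a b. a < K \<and> b < K} \<noteq> {}" by blast
  have "max_norm K M \<in> {\<bar>M a b\<bar> | a b. a < K \<and> b < K}"
    unfolding max_norm_def by (rule Max_in[OF fin ne])
  then obtain a b where "max_norm K M = \<bar>M a b\<bar>" "a < K" "b < K" by blast
  then show ?thesis using gt by (intro exI[of _ a] conjI exI[of _ b]) auto
qed

lemma max_norm_ge:
  assumes "a < K" "b < K"
  shows "\<bar>M a b\<bar> \<le> max_norm K M"
proof -
  have eq: "{\<bar>M a b\<bar> | a b. a < K \<and> b < K} = (\<lambda>(a, b). \<bar>M a b\<bar>) ` ({..<K} \<times> {..<K})" by auto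
  have fin: "finite {\<bar>M a b\<bar> | a b. a < K \<and> b < K}" unfolding eq by simp
  show ?thesis unfolding max_norm_def by (rule Max_ge[OF fin]) (use assms in auto)
qed

lemma card_labellings: "card (labellings n K) = K ^ n"
  unfolding labellings_def by (simp add: card_PiE)

lemma finite_labellings: "finite (labellings n K)"
  unfolding labellings_def by (simp add: finite_PiE)

lemma per_label_bound:
  assumes K: "K \<ge> 1" and z: "z \<in> labellings n K"
    and P_range: "\<And>a b. a < K \<Longrightarrow> b < K \<Longrightarrow> 0 \<le> P a b \<and> P a b \<le> 1"
    and x: "x > 0"
  shows "(\<Sum>A\<in>Pow (node_pairs n). wt (\<lambda>p. P (z (fst p)) (z (snd p))) (node_pairs n) A *
            (if x * real n ^ 2 < \<bar>O_tilde n A e a b - cond_exp_Z n P (\<lambda>z' A'. O_tilde n A' e a b) z\<bar> then 1 else 0))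
         \<le> 2 * exp (- (x ^ 2 * real n ^ 2) / (8 * max_norm K P + 4 * x / 3))"
  unfolding dev_pairs
proof (rule bernstein2[OF finite_node_pairs])
  have zK: "z i < K" if "i < n" for i using z that unfolding labellings_def by auto
  have pK: "z (fst p) < K" "z (snd p) < K" if "p \<in> node_pairs n" for p
    using that zK unfolding node_pairs_def by auto
  show q: "0 \<le> P (z (fst p)) (z (snd p)) \<and> P (z (fst p)) (z (snd p)) \<le> 1" if "p \<in> node_pairs n" for p
    using P_range pK[OF that] by auto
  show "\<bar>coef e a b p\<bar> \<le> 2" for p by (rule coef_bound)
  show pm: "0 \<le> max_norm K P" using max_norm_ge[of 0 K 0 P] K by auto
  show "0 < x" by fact
  show "0 \<le> real n ^ 2" by simp
  have "(\<Sum>p\<in>node_pairs n. P (z (fst p)) (z (snd p))) \<le> (\<Sum>p\<in>node_pairs n. max_norm K P)"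
  proof (rule sum_mono)
    fix p assume p: "p \<in> node_pairs n"
    show "P (z (fst p)) (z (snd p)) \<le> max_norm K P"
      using max_norm_ge[OF pK[OF p], of P] by linarith
  qed
  also have "\<dots> = real (card (node_pairs n)) * max_norm K P" by simp
  also have "\<dots> \<le> real n ^ 2 / 2 * max_norm K P"
  proof (rule mult_right_mono[OF _ pm])
    have "real (2 * card (node_pairs n)) \<le> real (n^2)" using card_node_pairs[of n] by linarith
    then show "real (card (node_pairs n)) \<le> real n ^ 2 / 2" by simp
  qed
  finally show "(\<Sum>p\<in>node_pairs n. P (z (fst p)) (z (snd p))) \<le> real n ^ 2 / 2 * max_norm K P" .
qed

lemma per_z:
  fixes x :: real
  assumes K: "K \<ge> 1" and z: "z \<in> labellings n K"
    and P_range: "\<And>a b. a < K \<Longrightarrow> b < K \<Longrightarrow> 0 \<le> P a b \<and> P a b \<le> 1"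
    and x: "x > 0"
  shows "(\<Sum>A\<in>Pow (node_pairs n). if (\<exists>e\<in>labellings n K.
           max_norm K (\<lambda>a b. O_tilde n A e a b
              - cond_exp_Z n P (\<lambda>z' A'. O_tilde n A' e a b) z) > x * real n ^ 2) then A_weight n P z A else 0)
         \<le> 2 * real K ^ (n + 2) * exp (- (x ^ 2 * real n ^ 2) / (8 * max_norm K P + 4 * x / 3))"
proof -
  define N where "N = node_pairs n"
  define L where "L = labellings n K"
  define q where "q p = P (z (fst p)) (z (snd p))" for p
  define Bd where "Bd = 2 * exp (- (x ^ 2 * real n ^ 2) / (8 * max_norm K P + 4 * x / 3))"
  define dev where "dev e a b A = O_tilde n A e a b - cond_exp_Z n P (\<lambda>z' A'. O_tilde n A' e a b) z" for e a b A
  define g where "g A e a b = wt q N A * (if x * real n ^ 2 < \<bar>dev e a b A\<bar> then 1 else 0)" for A e a b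
  have finL: "finite L" by (simp add: L_def finite_labellings)
  have zK: "z i < K" if "i < n" for i using z that unfolding labellings_def by auto
  have qr: "0 \<le> q p \<and> q p \<le> 1" if "p \<in> N" for p
    using that zK P_range unfolding N_def node_pairs_def q_def by auto
  have wnn: "wt q N A \<ge> 0" for A by (rule wt_nonneg) (use qr in auto)
  have gnn: "g A e a b \<ge> 0" for A e a b using wnn by (simp add: g_def)
  have step1: "(if (\<exists>e\<in>L. max_norm K (\<lambda>a b. dev e a b A) > x * real n ^ 2) then wt q N A else 0)
      \<le> (\<Sum>e\<in>L. \<Sum>a<K. \<Sum>b<K. g A e a b)" for A
  proof (cases "\<exists>e\<in>L. max_norm K (\<lambda>a b. dev e a b A) > x * real n ^ 2")
    case True
    then obtain e where e: "e \<in> L" "max_norm K (\<lambda>a b. dev e a b A) > x * real n ^ 2" by blast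
    obtain a b where ab: "a < K" "b < K" "x * real n ^ 2 < \<bar>dev e a b A\<bar>"
      using max_norm_gt[OF K e(2)] by blast
    have "wt q N A = g A e a b" using ab by (simp add: g_def)
    also have "\<dots> \<le> (\<Sum>b<K. g A e a b)"
      by (rule member_le_sum) (use ab gnn in auto)
    also have "\<dots> \<le> (\<Sum>a<K. \<Sum>b<K. g A e a b)"
      by (rule member_le_sum[where f = "\<lambda>a. \<Sum>b<K. g A e a b"]) (use ab gnn in \<open>auto intro: sum_nonneg\<close>)
    also have "\<dots> \<le> (\<Sum>e\<in>L. \<Sum>a<K. \<Sum>b<K. g A e a b)"
      by (rule member_le_sum[where f = "\<lambda>e. \<Sum>a<K. \<Sum>b<K. g A e a b"]) (use e finL gnn in \<open>auto intro!: sum_nonneg\<close>)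
    finally show ?thesis using True by simp
  next
    case False
    then show ?thesis using gnn by (simp add: sum_nonneg)
  qed
  have "(\<Sum>A\<in>Pow N. if (\<exists>e\<in>L. max_norm K (\<lambda>a b. dev e a b A) > x * real n ^ 2) then wt q N A else 0)
      \<le> (\<Sum>A\<in>Pow N. \<Sum>e\<in>L. \<Sum>a<K. \<Sum>b<K. g A e a b)"
    by (rule sum_mono) (rule step1)
  also have "\<dots> = (\<Sum>e\<in>L. \<Sum>a<K. \<Sum>b<K. \<Sum>A\<in>Pow N. g A e a b)"
  proof -
    have "(\<Sum>A\<in>Pow N. \<Sum>e\<in>L. \<Sum>a<K. \<Sum>b<K. g A e a b) = (\<Sum>e\<in>L. \<Sum>A\<in>Pow N. \<Sum>a<K. \<Sum>b<K. g A e a b)"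
      by (rule sum.swap)
    also have "\<dots> = (\<Sum>e\<in>L. \<Sum>a<K. \<Sum>A\<in>Pow N. \<Sum>b<K. g A e a b)"
      by (intro sum.cong refl sum.swap)
    also have "\<dots> = (\<Sum>e\<in>L. \<Sum>a<K. \<Sum>b<K. \<Sum>A\<in>Pow N. g A e a b)"
      by (intro sum.cong refl sum.swap)
    finally show ?thesis .
  qed
  also have "\<dots> \<le> (\<Sum>e\<in>L. \<Sum>a<K. \<Sum>b<K. Bd)"
  proof (intro sum_mono)
    fix e a b
    show "(\<Sum>A\<in>Pow N. g A e a b) \<le> Bd"
      using per_label_bound[OF K z P_range x, where e=e and a=a and b=b]
      unfolding g_def dev_def Bd_def N_def q_def by simp
  qed
  also have "\<dots> = real (card L) * (real K * (real K * Bd))" by simp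
  also have "\<dots> = 2 * real K ^ (n + 2) * exp (- (x ^ 2 * real n ^ 2) / (8 * max_norm K P + 4 * x / 3))"
    by (simp add: L_def card_labellings Bd_def power_add power2_eq_square)
  finally show ?thesis
    unfolding N_def L_def dev_def q_def A_weight_wt by simp
qed

theorem lemmaA2:
  fixes n K :: nat and \<pi> :: "nat \<Rightarrow> real" and P :: "nat \<Rightarrow> nat \<Rightarrow> real" and x :: real
  assumes K_pos: "K \<ge> 1"
    and pi_nonneg: "\<And>a. a < K \<Longrightarrow> \<pi> a \<ge> 0"
    and pi_sum: "(\<Sum>a<K. \<pi> a) = 1"
    and P_sym: "\<And>a b. a < K \<Longrightarrow> b < K \<Longrightarrow> P a b = P b a"
    and P_range: "\<And>a b. a < K \<Longrightarrow> b < K \<Longrightarrow> 0 \<le> P a b \<and> P a b \<le> 1"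
    and x_pos: "x > 0"
  shows "sbm_prob n K \<pi> P (\<lambda>z A. \<exists>e\<in>labellings n K.
           max_norm K (\<lambda>a b. O_tilde n A e a b
              - cond_exp_Z n P (\<lambda>z' A'. O_tilde n A' e a b) z) > x * real n ^ 2)
         \<le> 2 * real K ^ (n + 2) * exp (- (x ^ 2 * real n ^ 2) / (8 * max_norm K P + 4 * x / 3))"
proof -
  define Bf where "Bf = 2 * real K ^ (n + 2) * exp (- (x ^ 2 * real n ^ 2) / (8 * max_norm K P + 4 * x / 3))"
  define Ev where "Ev z A = (\<exists>e\<in>labellings n K.
           max_norm K (\<lambda>a b. O_tilde n A e a b
              - cond_exp_Z n P (\<lambda>z' A'. O_tilde n A' e a b) z) > x * real n ^ 2)" for z A
  have Znn: "Z_weight n \<pi> z \<ge> 0" if "z \<in> labellings n K" for z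
    using that pi_nonneg unfolding Z_weight_def labellings_def by (auto intro!: prod_nonneg simp: PiE_iff)
  have Zsum: "(\<Sum>z\<in>labellings n K. Z_weight n \<pi> z) = 1"
  proof -
    have "(\<Prod>i\<in>{0..<n}. \<Sum>a\<in>{0..<K}. \<pi> a) = (\<Sum>g\<in>PiE {0..<n} (\<lambda>_. {0..<K}). \<Prod>i\<in>{0..<n}. \<pi> (g i))"
      by (rule prod_sum_PiE) auto
    moreover have "(\<Sum>a\<in>{0..<K}. \<pi> a) = 1" using pi_sum by (simp add: atLeast0LessThan)
    ultimately show ?thesis unfolding Z_weight_def labellings_def by (simp add: atLeast0LessThan)
  qed
  have "sbm_prob n K \<pi> P Ev = (\<Sum>z\<in>labellings n K. Z_weight n \<pi> z *
           (\<Sum>A\<in>Pow (node_pairs n). if Ev z A then A_weight n P z A else 0))"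
    unfolding sbm_prob_def by (intro sum.cong refl) (auto simp: sum_distrib_left intro!: sum.cong)
  also have "\<dots> \<le> (\<Sum>z\<in>labellings n K. Z_weight n \<pi> z * Bf)"
  proof (intro sum_mono mult_left_mono)
    fix z assume z: "z \<in> labellings n K"
    show "0 \<le> Z_weight n \<pi> z" by (rule Znn[OF z])
    show "(\<Sum>A\<in>Pow (node_pairs n). if Ev z A then A_weight n P z A else 0) \<le> Bf"
      unfolding Ev_def Bf_def by (rule per_z[OF K_pos z P_range x_pos])
  qed
  also have "\<dots> = Bf" using Zsum by (simp add: sum_distrib_right[symmetric])
  finally show ?thesis unfolding Ev_def Bf_def .
qed


end
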